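(* Let $\beta>0$, $\alpha=1/\beta$, $n\ge1$, and let $\sigma:\mathbb{R}\to\mathbb{R}$ be either ReLU, $\sigma(t)=\max(0,t)$, or LeakyReLU, $\sigma(t)=\max(kt,t)$ with fixed $k\in(0,1)$, applied coordinatewise to vectors. Let $\mathbf{x}^{n,\beta}\in\mathbb{H}^{n,\beta}$ and $\mathbf{x}^{n,\alpha}=p_{\mathbb{H}^{n,\beta}\to\mathbb{D}^{n,\alpha}}(\mathbf{x}^{n,\beta})$. Then the Lorentzian pointwise non-linearity and the M\"obius pointwise non-linearity are equivalent: $$p_{\mathbb{H}^{n,\beta}\to\mathbb{D}^{n,\alpha}}\big(\sigma^{\otimes^\beta}(\mathbf{x}^{n,\beta})\big)=\sigma^{\otimes^\alpha}(\mathbf{x}^{n,\alpha}).$$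
   Context: Lorentzian scalar product on $\mathbb{R}^{n+1}$: $\langle \mathbf{x},\mathbf{y}\rangle_{\mathcal{L}}=-x_0y_0+\sum_{i=1}^n x_iy_i$, $\|\mathbf{v}\|_{\mathcal{L}}=\sqrt{\langle\mathbf{v},\mathbf{v}\rangle_{\mathcal{L}}}$. Hyperboloid model $\mathbb{H}^{n,\beta}=\{\mathbf{x}\in\mathbb{R}^{n+1}:\langle\mathbf{x},\mathbf{x}\rangle_{\mathcal{L}}=-\beta,\ x_0>0\}$ with origin $\mathbf{0}=(\sqrt{\beta},0,\dots,0)$; tangent space at origin $\{\mathbf{v}\in\mathbb{R}^{n+1}:v_0=0\}$. Distance $d^\beta_{\mathbb{H}}(\mathbf{x},\mathbf{y})=\sqrt{\beta}\,\mathrm{arcosh}(-\langle\mathbf{x},\mathbf{y}\rangle_{\mathcal{L}}/\beta)$. Exponential map at origin: $\exp^\beta_{\mathbf{0}}(\mathbf{v})=\cosh(\|\mathbf{v}\|_{\mathcal{L}}/\sqrt{\beta})\mathbf{0}+\sqrt{\beta}\sinh(\|\mathbf{v}\|_{\mathcal{L}}/\sqrt{\beta})\mathbf{v}/\|\mathbf{v}\|_{\mathcal{L}}$ for $\mathbf{v}\ne0$, $\exp^\beta_{\mathbf{0}}(0)=\mathbf{0}$. Logarithmic map at origin: $\log^\beta_{\mathbf{0}}(\mathbf{y})=d^\beta_{\mathbb{H}}(\mathbf{0},\mathbf{y})\frac{\mathbf{y}+\frac1\beta\langle\mathbf{0},\mathbf{y}\rangle_{\mathcal{L}}\mathbf{0}}{\|\mathbf{y}+\frac1\beta\langle\mathbf{0},\mathbf{y}\rangle_{\mathcal{L}}\mathbf{0}\|_{\mathcal{L}}}$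 for $\mathbf{y}\ne\mathbf{0}$, $\log^\beta_{\mathbf{0}}(\mathbf{0})=0$. Lorentzian pointwise non-linearity: writing $\log^\beta_{\mathbf{0}}(\mathbf{x})=(v_0,\dots,v_n)$, $\sigma^{\otimes^\beta}(\mathbf{x})=\exp^\beta_{\mathbf{0}}\big((0,\sigma(v_1),\dots,\sigma(v_n))\big)$. Poincar\'e ball $\mathbb{D}^{n,\alpha}=\{\mathbf{x}\in\mathbb{R}^n:\alpha\|\mathbf{x}\|^2<1\}$ with $\exp^\alpha_{\mathbf{0}}(\mathbf{v})=\tanh(\sqrt{\alpha}\|\mathbf{v}\|)\frac{\mathbf{v}}{\sqrt{\alpha}\|\mathbf{v}\|}$ and $\log^\alpha_{\mathbf{0}}(\mathbf{y})=\tanh^{-1}(\sqrt{\alpha}\|\mathbf{y}\|)\frac{\mathbf{y}}{\sqrt{\alpha}\|\mathbf{y}\|}$ for nonzero arguments, both mapping $0$ to $0$. M\"obius pointwise non-linearity: $\sigma^{\otimes^\alpha}(\mathbf{x})=\exp^\alpha_{\mathbf{0}}(\sigma(\log^\alpha_{\mathbf{0}}(\mathbf{x})))$. Isometry $p_{\mathbb{H}^{n,\beta}\to\mathbb{D}^{n,\alpha}}(x_0,x_1,\dots,x_n)=\frac{\sqrt{\beta}(x_1,\dots,x_n)}{\sqrt{\beta}+x_0}$. *)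

theory Defs
  imports Complex_Main
begin

text \<open>Vectors of R^(n+1) and R^n are represented as real lists of length n+1 resp. n.
  For a list x of length n+1, x!0 is the time-like coordinate x_0.\<close>

definition vadd :: "real list \<Rightarrow> real list \<Rightarrow> real list" where
  "vadd x y = map2 (+) x y"

definition vscale :: "real \<Rightarrow> real list \<Rightarrow> real list" where
  "vscale c x = map (\<lambda>a. c * a) x"

definition lor_inner :: "real list \<Rightarrow> real list \<Rightarrow> real" where
  "lor_inner x y = - (x!0 * y!0) + (\<Sum>i = 1..<length x. x!i * y!i)"

definition lor_norm :: "real list \<Rightarrow> real" where
  "lor_norm v = sqrt (lor_inner v v)"

definition hyperboloid :: "nat \<Rightarrow> real \<Rightarrow> real list set" where
  "hyperboloid n \<beta> = {x. length x = n + 1 \<and> lor_inner x x = - \<beta> \<and> x!0 > 0}"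

definition H_origin :: "nat \<Rightarrow> real \<Rightarrow> real list" where
  "H_origin n \<beta> = sqrt \<beta> # replicate n 0"

definition H_dist :: "real \<Rightarrow> real list \<Rightarrow> real list \<Rightarrow> real" where
  "H_dist \<beta> x y = sqrt \<beta> * arcosh (- lor_inner x y / \<beta>)"

definition H_exp0 :: "nat \<Rightarrow> real \<Rightarrow> real list \<Rightarrow> real list" where
  "H_exp0 n \<beta> v =
     (if v = replicate (n + 1) 0 then H_origin n \<beta>
      else vadd (vscale (cosh (lor_norm v / sqrt \<beta>)) (H_origin n \<beta>))
                (vscale (sqrt \<beta> * sinh (lor_norm v / sqrt \<beta>) / lor_norm v) v))"

definition H_log0 :: "nat \<Rightarrow> real \<Rightarrow> real list \<Rightarrow> real list" where
  "H_log0 n \<beta> y =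
     (if y = H_origin n \<beta> then replicate (n + 1) 0
      else (let u = vadd y (vscale (lor_inner (H_origin n \<beta>) y / \<beta>) (H_origin n \<beta>))
            in vscale (H_dist \<beta> (H_origin n \<beta>) y / lor_norm u) u))"

definition lor_nonlin :: "nat \<Rightarrow> real \<Rightarrow> (real \<Rightarrow> real) \<Rightarrow> real list \<Rightarrow> real list" where
  "lor_nonlin n \<beta> \<sigma> x = (let v = H_log0 n \<beta> x in H_exp0 n \<beta> (0 # map \<sigma> (tl v)))"

definition enorm :: "real list \<Rightarrow> real" where
  "enorm x = sqrt (\<Sum>i<length x. (x!i)^2)"

definition D_exp0 :: "real \<Rightarrow> real list \<Rightarrow> real list" where
  "D_exp0 \<alpha> v = (if v = replicate (length v) 0 then v
      else vscale (tanh (sqrt \<alpha> * enorm v) / (sqrt \<alpha> * enorm v)) v)"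

definition D_log0 :: "real \<Rightarrow> real list \<Rightarrow> real list" where
  "D_log0 \<alpha> y = (if y = replicate (length y) 0 then y
      else vscale (artanh (sqrt \<alpha> * enorm y) / (sqrt \<alpha> * enorm y)) y)"

definition mob_nonlin :: "real \<Rightarrow> (real \<Rightarrow> real) \<Rightarrow> real list \<Rightarrow> real list" where
  "mob_nonlin \<alpha> \<sigma> x = D_exp0 \<alpha> (map \<sigma> (D_log0 \<alpha> x))"

definition p_HD :: "real \<Rightarrow> real list \<Rightarrow> real list" where
  "p_HD \<beta> x = map (\<lambda>a. sqrt \<beta> * a / (sqrt \<beta> + x!0)) (tl x)"

end

theory Submission
  imports Defs
begin
lemma lor_inner_Cons: "length as = length bs \<Longrightarrow> lor_inner (a#as) (b#bs) = -(a*b) + (\<Sum>i<length as. as!i*bs!i)"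
proof -
  have "(\<Sum>i = 1..<length (a#as). (a#as)!i*(b#bs)!i) = (\<Sum>i = Suc 0..<Suc (length as). (a#as)!i*(b#bs)!i)" by simp
  also have "\<dots> = (\<Sum>i = 0..<length as. (a#as)!(Suc i)*(b#bs)!(Suc i))" by (rule sum.shift_bounds_Suc_ivl)
  also have "\<dots> = (\<Sum>i<length as. as!i*bs!i)" by (simp add: atLeast0LessThan)
  finally show ?thesis unfolding lor_inner_def by simp
qed
lemma enorm_vscale: "enorm (vscale c v) = \<bar>c\<bar> * enorm v"
  unfolding enorm_def vscale_def
  by (simp add: power_mult_distrib sum_distrib_left[symmetric] real_sqrt_mult)
lemma enorm_zero_iff: "enorm v = 0 \<longleftrightarrow> v = replicate (length v) 0"
  unfolding enorm_def
  apply (simp only: real_sqrt_eq_zero_cancel_iff)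
  apply (subst sum_nonneg_eq_0_iff) apply auto
  apply (metis (mono_tags, lifting) lessThan_iff list_eq_iff_nth_eq nth_replicate length_replicate)
  by (metis nth_replicate)
lemma vscale_vscale: "vscale a (vscale b v) = vscale (a*b) v" by (simp add: vscale_def)
lemma vscale_Cons: "vscale c (a#v) = (c*a) # vscale c v" by (simp add: vscale_def)
lemma vadd_Cons: "vadd (a#v) (b#w) = (a+b) # vadd v w" by (simp add: vadd_def)
lemma vadd_rep0_r: "vadd v (replicate (length v) 0) = v" unfolding vadd_def
  by (induct v) auto
lemma vadd_rep0_l: "vadd (replicate (length v) 0) v = v" unfolding vadd_def
  by (induct v) auto
lemma vscale_rep0: "vscale c (replicate n 0) = replicate n 0" by (simp add: vscale_def)
lemma length_vscale[simp]: "length (vscale c v) = length v" by (simp add: vscale_def)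
lemma lor_norm_0Cons: "lor_norm (0 # w) = enorm w"
  unfolding lor_norm_def enorm_def by (simp add: lor_inner_Cons power2_eq_square)
lemma tanh_half: "tanh ((s::real)/2) = sinh s / (1 + cosh s)"
proof -
  have "sinh s = 2 * sinh (s/2) * cosh (s/2)" using sinh_double[of "s/2"] by simp
  moreover have "cosh s = 2 * (cosh (s/2))^2 - 1" using cosh_double_cosh[of "s/2"] by simp
  moreover have "cosh (s/2) > 0" by simp
  ultimately show ?thesis by (simp add: tanh_def field_simps power2_eq_square)
qed
lemma p_HD_Cons: "p_HD \<beta> (h # v) = vscale (sqrt \<beta> / (sqrt \<beta> + h)) v"
  by (simp add: p_HD_def vscale_def)
lemma map_vscale: assumes "\<And>t. \<sigma> (c*t) = c * \<sigma> t" shows "map \<sigma> (vscale c v) = vscale c (map \<sigma> v)"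
  using assms by (simp add: vscale_def)

theorem theorem3p3:
  fixes \<beta> \<alpha> :: real and n :: nat and \<sigma> :: "real \<Rightarrow> real" and x :: "real list"
  assumes "\<beta> > 0" and "\<alpha> = 1 / \<beta>" and "n \<ge> 1"
    and "\<sigma> = (\<lambda>t. max 0 t) \<or> (\<exists>k. 0 < k \<and> k < 1 \<and> \<sigma> = (\<lambda>t. max (k * t) t))"
    and "x \<in> hyperboloid n \<beta>"
  shows "p_HD \<beta> (lor_nonlin n \<beta> \<sigma> x) = mob_nonlin \<alpha> \<sigma> (p_HD \<beta> x)"
proof -
  have hom: "\<sigma> (c*t) = c * \<sigma> t" if "c \<ge> 0" for c t
    using assms(4)
  proof (elim disjE)
    assume "\<sigma> = (\<lambda>t. max 0 t)" then show ?thesis using that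
      by (simp add: max_mult_distrib_left)
  next
    assume "\<exists>k. 0 < k \<and> k < 1 \<and> \<sigma> = (\<lambda>t. max (k * t) t)"
    then obtain k where "\<sigma> = (\<lambda>t. max (k * t) t)" by blast
    then show ?thesis using that by (simp add: max_mult_distrib_left mult.left_commute)
  qed
  have s0: "\<sigma> 0 = 0" using hom[of 0 0] by simp
  have lx: "length x = n + 1" and hx: "lor_inner x x = - \<beta>" and x0p: "x!0 > 0"
    using assms(5) by (auto simp: hyperboloid_def)
  obtain x0 xs where x: "x = x0 # xs" using lx by (cases x) auto
  have lxs: "length xs = n" using lx x by simp
  have x0p: "x0 > 0" using x0p x by simp
  define sb where "sb = sqrt \<beta>"
  have sbp: "sb > 0" using assms(1) sb_def by simp
  have sb2: "sb * sb = \<beta>" using assms(1) sb_def by simp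
  define r where "r = enorm xs"
  have r0: "r \<ge> 0" unfolding r_def enorm_def by (intro real_sqrt_ge_zero sum_nonneg) simp
  have r2: "r * r = (\<Sum>i<length xs. xs!i * xs!i)"
  proof -
    have sn: "0 \<le> (\<Sum>i<length xs. xs!i * xs!i)" by (intro sum_nonneg) simp
    show ?thesis unfolding r_def enorm_def using sn by (simp add: power2_eq_square)
  qed
  have x0r: "x0 * x0 = \<beta> + r * r" using hx r2 unfolding x by (simp add: lor_inner_Cons)
  have orig: "H_origin n \<beta> = sb # replicate n 0" by (simp add: H_origin_def sb_def)
  have rep0: "map \<sigma> (replicate k 0) = replicate k 0" for k by (simp add: s0)
  show ?thesis
  proof (cases "r = 0")
    case True
    then have xs0: "xs = replicate n 0" using enorm_zero_iff[of xs] lxs r_def by simp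
    have "x0^2 = sb^2" using x0r True sb2 by (simp add: power2_eq_square)
    then have x0sb: "x0 = sb" using x0p sbp by (simp add: power2_eq_iff_nonneg)
    have xo: "x = H_origin n \<beta>" using x xs0 x0sb orig by simp
    have "p_HD \<beta> (lor_nonlin n \<beta> \<sigma> x) = replicate n 0"
      unfolding xo lor_nonlin_def H_log0_def H_exp0_def
      by (simp add: rep0 p_HD_def H_origin_def Let_def s0)
    moreover have "mob_nonlin \<alpha> \<sigma> (p_HD \<beta> x) = replicate n 0"
      unfolding xo mob_nonlin_def D_log0_def D_exp0_def
      by (simp add: rep0 p_HD_def H_origin_def s0)
    ultimately show ?thesis by simp
  next
    case False
    then have rp: "r > 0" using r0 by simp
    have xsn0: "xs \<noteq> replicate n 0" using rp lxs enorm_zero_iff[of xs] r_def by auto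
    define q where "q = x0 / sb"
    have x0q: "x0 = sb * q" using sbp q_def by simp
    have q2: "q * q = 1 + (r/sb) * (r/sb)" using x0r sb2 sbp assms(1) unfolding x0q
      by (simp add: field_simps)
    have q1: "q > 1"
    proof -
      have "q * q > 1" using q2 rp sbp by (simp add: add_pos_pos)
      moreover have "q > 0" using x0p sbp q_def by simp
      ultimately show ?thesis by (metis less_1_mult linorder_not_less mult_le_one order_less_imp_le)
    qed
    define d where "d = arcosh q"
    have chd: "cosh d = q" using q1 d_def by simp
    have shd: "sinh d = r / sb"
    proof -
      have "sinh d = sqrt (q^2 - 1)" using q1 d_def sinh_arcosh_real by simp
      also have "q^2 - 1 = (r/sb)^2" using q2 by (simp add: power2_eq_square)
      finally show ?thesis using rp sbp by simp
    qed
    have dp: "d > 0" using q1 d_def by simp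
    define c where "c = sb * d / r"
    have cp: "c > 0" using sbp dp rp c_def by simp
    define M where "M = map \<sigma> xs"
    have lM: "length M = n" using lxs M_def by simp
    define m where "m = enorm M"
    have m0: "m \<ge> 0" unfolding m_def enorm_def by (intro real_sqrt_ge_zero sum_nonneg) simp
    have xno: "x \<noteq> H_origin n \<beta>" using xsn0 x orig by simp
    have ip: "lor_inner (H_origin n \<beta>) x = - (sb * x0)"
      unfolding orig x using lxs by (simp add: lor_inner_Cons)
    have u: "vadd x (vscale (lor_inner (H_origin n \<beta>) x / \<beta>) (H_origin n \<beta>)) = 0 # xs"
      unfolding ip orig x using sb2 sbp lxs ip[unfolded orig x] assms(1)
      by (simp add: vscale_Cons vadd_Cons vscale_rep0 field_simps vadd_rep0_r[of xs, simplified lxs])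
    have dist: "H_dist \<beta> (H_origin n \<beta>) x = sb * d"
    proof -
      have "sb * x0 / \<beta> = x0 / sb" using sb2 sbp by (auto simp: field_simps)
      then show ?thesis unfolding H_dist_def ip d_def sb_def[symmetric] q_def by simp
    qed
    have log: "H_log0 n \<beta> x = 0 # vscale c xs"
      unfolding H_log0_def using xno u dist
      by (simp add: Let_def lor_norm_0Cons r_def[symmetric] vscale_Cons c_def)
    have lorn: "lor_nonlin n \<beta> \<sigma> x = H_exp0 n \<beta> (0 # vscale c M)"
      unfolding lor_nonlin_def log M_def using cp hom by (simp add: map_vscale)
    have pHx: "p_HD \<beta> x = vscale (sb/(sb+x0)) xs" unfolding x p_HD_Cons sb_def ..
    define e where "e = sb/(sb+x0)"
    have ep: "e > 0" using e_def sbp x0p by simp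
    have sa: "sqrt \<alpha> = 1 / sb" using assms(2) sb_def by (simp add: real_sqrt_divide)
    have tau: "sqrt \<alpha> * enorm (vscale e xs) = tanh (d/2)"
      unfolding tanh_half chd shd enorm_vscale sa r_def[symmetric] x0q e_def using sbp rp q1
      by (simp add: field_simps)
    have yn0: "vscale e xs \<noteq> replicate (length (vscale e xs)) 0"
      using enorm_zero_iff[of "vscale e xs"] enorm_vscale[of e xs] ep rp r_def by auto
    have dl: "D_log0 \<alpha> (vscale e xs) = vscale (c/2) xs"
    proof -
      have "D_log0 \<alpha> (vscale e xs) = vscale ((d/2) / tanh (d/2) * e) xs"
        unfolding D_log0_def using yn0 tau by (simp add: artanh_tanh_real vscale_vscale)
      also have "(d/2) / tanh (d/2) * e = c/2"
      proof -
        have B: "r * (sb * 2) + q * (r * (sb * 2)) > 0" using sbp rp q1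
          by (simp add: add_pos_pos)
        show ?thesis
          unfolding tanh_half chd shd e_def c_def x0q using sbp rp q1 dp B
          by (simp add: field_simps)
      qed
      finally show ?thesis .
    qed
    have rhs1: "mob_nonlin \<alpha> \<sigma> (p_HD \<beta> x) = D_exp0 \<alpha> (vscale (c/2) M)"
    proof -
      have "map \<sigma> (vscale (c/2) xs) = vscale (c/2) M" unfolding M_def
        by (rule map_vscale, rule hom) (use cp in simp)
      then show ?thesis unfolding mob_nonlin_def pHx e_def[symmetric] dl by simp
    qed
    show ?thesis
    proof (cases "m = 0")
      case True
      then have M0: "M = replicate n 0" using enorm_zero_iff[of M] lM m_def by simp
      show ?thesis unfolding rhs1 lorn M0 using cp
        by (simp add: vscale_rep0 H_exp0_def D_exp0_def orig p_HD_Cons)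
    next
      case False
      then have mp: "m > 0" using m0 by simp
      define s where "s = c * m / sb"
      have Mn0: "M \<noteq> replicate n 0" using False enorm_zero_iff[of M] lM m_def by auto
      have cM: "vscale c M \<noteq> replicate n 0"
        using enorm_zero_iff[of "vscale c M"] enorm_vscale[of c M] cp mp m_def lM by auto
      have lhs: "p_HD \<beta> (lor_nonlin n \<beta> \<sigma> x)
          = vscale (sb / (sb + cosh s * sb) * (sb * sinh s / (c * m) * c)) M"
        unfolding lorn H_exp0_def using cM
        by (simp add: lor_norm_0Cons enorm_vscale m_def[symmetric] s_def sb_def[symmetric] orig
             vscale_Cons vadd_Cons vscale_rep0 vscale_vscale p_HD_Cons
             vadd_rep0_l[of "vscale _ M", simplified lM length_vscale] cp abs_of_pos)
      have c2M: "vscale (c/2) M \<noteq> replicate (length (vscale (c/2) M)) 0"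
        using enorm_zero_iff[of "vscale (c/2) M"] enorm_vscale[of "c/2" M] cp mp m_def by auto
      have rhs: "D_exp0 \<alpha> (vscale (c/2) M) = vscale (tanh (s/2) / (s/2) * (c/2)) M"
        unfolding D_exp0_def using c2M
        by (simp add: enorm_vscale m_def[symmetric] sa s_def abs_of_pos cp vscale_vscale field_simps)
      have "sb / (sb + cosh s * sb) * (sb * sinh s / (c * m) * c) = tanh (s/2) / (s/2) * (c/2)"
      proof -
        have sp: "s > 0" using s_def sbp cp mp by simp
        have C: "1 + cosh s > 0" using cosh_real_pos[of s] by linarith
        have e1: "sb / (sb + cosh s * sb) * (sb * sinh s / (c * m) * c) = sb * sinh s / (m * (1 + cosh s))"
        proof -
          have "sb + cosh s * sb = sb * (1 + cosh s)" by (simp add: algebra_simps)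
          then have "sb / (sb + cosh s * sb) = 1 / (1 + cosh s)" using sbp by simp
          moreover have "sb * sinh s / (c * m) * c = sb * sinh s / m" using cp by simp
          ultimately show ?thesis by simp
        qed
        have e2: "tanh (s/2) / (s/2) * (c/2) = sb * sinh s / (m * (1 + cosh s))"
        proof -
          have cs: "c / s = sb / m" unfolding s_def using sbp cp mp by (simp add: field_simps)
          have "tanh (s/2) / (s/2) * (c/2) = tanh (s/2) * (c / s)" using sp by (simp add: field_simps)
          also have "\<dots> = sinh s / (1 + cosh s) * (sb / m)" unfolding cs tanh_half ..
          also have "\<dots> = sb * sinh s / (m * (1 + cosh s))" by (simp add: mult.commute)
          finally show ?thesis .
        qed
        show ?thesis using e1 e2 by simp
      qed
      then show ?thesis using lhs rhs rhs1 by simp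
    qed
  qed
qed
end
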